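(* Let $T$ be a hedge of height $H$, let $C\in\mathcal R(P_{H+1})$ and let $A\in\mathcal{PH}(C,T)$. For $i=1,\dots,H+1$ let $C_i:=C[\{H-i+2,\dots,H+1\}]$ be the trailing $i\times i$ principal submatrix of $C$. Then, as multisets, $$\sigma(A)=\bigcup_{i=1}^{H+1}\ell_i(T)\,\sigma(C_i).$$
   Context: Rooted trees, children, leaves: a rooted tree is a tree with a distinguished root; $y$ is a child of adjacent $z$ if the root-to-$y$ path passes through $z$; in a rooted tree with at least two vertices a leaf is a non-root vertex of degree 1, and in $P_1$ the single vertex is root and leaf. A hedge is a rooted tree which is $P_1$ or in which all leaves are at the same distance from the root. The height $\mathrm{h}(u)$ of a vertex is its distance to a nearest leaf; the height of the hedge is the height of the root. $V_i(T)$ is the set of vertices of height $i$, and $\ell_i(T):=|V_{i-1}(T)|-|V_i(T)|$ for $i\ge1$. $P_n$ is the path $1-2-\cdots-n$, viewed as a hedge of height $n-1$ rooted at vertex $1$ (so vertex $j$ has height $n-j$). $\mathcal R(T)$: real matrices indexed by $V(T)$ with $a_{ij}\ne0$ iff $\{i,j\}\in E(T)$ for $i\ne j$, and $a_{ij}a_{ji}>0$ on edges; diagonal arbitrary. $A[U]$ is the principal submatrix on $U$. Multiset union adds multiplicities; $s\Lambda$ multiplies multiplicities by $s$. Path-to-hedge construction: for a hedge $T$ of height $H$ and $C=(c_{ij})\in\mathcal R(P_{H+1})$, for $v\in V(T)$ let $v'=H+1-\mathrm{h}(v)$ be the vertex of $P_{H+1}$ of the same height. $\mathcal{PH}(C,T)$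 is the set of $A=(a_{uv})\in\mathcal R(T)$ such that $a_{vv}=c_{v'v'}$ for every vertex $v$, and for every non-leaf vertex $v$, $\sum_{u\text{ child of }v}a_{vu}a_{uv}=c_{v',v'+1}\,c_{v'+1,v'}$. *)

theory Defs
  imports Complex_Main "HOL-Library.Multiset" "HOL-Computational_Algebra.Polynomial"
    "HOL-Combinatorics.Permutations"
begin

definition graph_edges :: "'a set \<Rightarrow> ('a \<Rightarrow> 'a \<Rightarrow> bool) \<Rightarrow> 'a set set" where
  "graph_edges V adj = {{u, v} | u v. u \<in> V \<and> v \<in> V \<and> adj u v}"

definition is_graph :: "'a set \<Rightarrow> ('a \<Rightarrow> 'a \<Rightarrow> bool) \<Rightarrow> bool" where
  "is_graph V adj \<longleftrightarrow> finite V \<and> V \<noteq> {} \<and> (\<forall>u v. adj u v \<longrightarrow> u \<in> V \<and> v \<in> V)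
     \<and> (\<forall>u v. adj u v \<longrightarrow> adj v u) \<and> (\<forall>u. \<not> adj u u)"

definition walk_len :: "('a \<Rightarrow> 'a \<Rightarrow> bool) \<Rightarrow> nat \<Rightarrow> 'a \<Rightarrow> 'a \<Rightarrow> bool" where
  "walk_len adj n u v = (adj ^^ n) u v"

definition connected_graph :: "'a set \<Rightarrow> ('a \<Rightarrow> 'a \<Rightarrow> bool) \<Rightarrow> bool" where
  "connected_graph V adj \<longleftrightarrow> (\<forall>u\<in>V. \<forall>v\<in>V. \<exists>n. walk_len adj n u v)"

text \<open>A tree: a connected graph with |E| = |V| - 1 (equivalently, connected and acyclic).\<close>
definition is_tree :: "'a set \<Rightarrow> ('a \<Rightarrow> 'a \<Rightarrow> bool) \<Rightarrow> bool" where
  "is_tree V adj \<longleftrightarrow> is_graph V adj \<and> connected_graph V adj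
     \<and> card (graph_edges V adj) + 1 = card V"

definition gdist :: "('a \<Rightarrow> 'a \<Rightarrow> bool) \<Rightarrow> 'a \<Rightarrow> 'a \<Rightarrow> nat" where
  "gdist adj u v = (LEAST n. walk_len adj n u v)"

definition degree :: "'a set \<Rightarrow> ('a \<Rightarrow> 'a \<Rightarrow> bool) \<Rightarrow> 'a \<Rightarrow> nat" where
  "degree V adj v = card {u \<in> V. adj v u}"

text \<open>y is a child of z: y is adjacent to z and the root-to-y path passes through z
  (in a tree: d(r,y) = d(r,z) + d(z,y)).\<close>
definition is_child :: "('a \<Rightarrow> 'a \<Rightarrow> bool) \<Rightarrow> 'a \<Rightarrow> 'a \<Rightarrow> 'a \<Rightarrow> bool" where
  "is_child adj r y z \<longleftrightarrow> adj y z \<and> gdist adj r y = gdist adj r z + gdist adj z y"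

definition is_leaf :: "'a set \<Rightarrow> ('a \<Rightarrow> 'a \<Rightarrow> bool) \<Rightarrow> 'a \<Rightarrow> 'a \<Rightarrow> bool" where
  "is_leaf V adj r v \<longleftrightarrow>
     (if V = {r} then v = r else v \<in> V \<and> v \<noteq> r \<and> degree V adj v = 1)"

definition is_hedge :: "'a set \<Rightarrow> ('a \<Rightarrow> 'a \<Rightarrow> bool) \<Rightarrow> 'a \<Rightarrow> bool" where
  "is_hedge V adj r \<longleftrightarrow> is_tree V adj \<and> r \<in> V \<and>
     (V = {r} \<or> (\<forall>u v. is_leaf V adj r u \<and> is_leaf V adj r v \<longrightarrow> gdist adj r u = gdist adj r v))"

definition vheight :: "'a set \<Rightarrow> ('a \<Rightarrow> 'a \<Rightarrow> bool) \<Rightarrow> 'a \<Rightarrow> 'a \<Rightarrow> nat" where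
  "vheight V adj r u = Min {gdist adj u w | w. is_leaf V adj r w}"

definition level_set :: "'a set \<Rightarrow> ('a \<Rightarrow> 'a \<Rightarrow> bool) \<Rightarrow> 'a \<Rightarrow> nat \<Rightarrow> 'a set" where
  "level_set V adj r i = {v \<in> V. vheight V adj r v = i}"

text \<open>ell_i(T) = |V_{i-1}| - |V_i| for i >= 1 (as an integer; it is nonnegative for hedges).\<close>
definition ell :: "'a set \<Rightarrow> ('a \<Rightarrow> 'a \<Rightarrow> bool) \<Rightarrow> 'a \<Rightarrow> nat \<Rightarrow> int" where
  "ell V adj r i = int (card (level_set V adj r (i - 1))) - int (card (level_set V adj r i))"

definition in_R :: "'a set \<Rightarrow> ('a \<Rightarrow> 'a \<Rightarrow> bool) \<Rightarrow> ('a \<Rightarrow> 'a \<Rightarrow> real) \<Rightarrow> bool" where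
  "in_R V adj A \<longleftrightarrow>
     (\<forall>i\<in>V. \<forall>j\<in>V. i \<noteq> j \<longrightarrow> (A i j \<noteq> 0 \<longleftrightarrow> adj i j)) \<and>
     (\<forall>i\<in>V. \<forall>j\<in>V. adj i j \<longrightarrow> A i j * A j i > 0)"

text \<open>Characteristic polynomial det(xI - A[U]) of the principal submatrix on a finite index
  set U, via the Leibniz formula for the determinant.\<close>
definition charpoly :: "'a set \<Rightarrow> ('a \<Rightarrow> 'a \<Rightarrow> real) \<Rightarrow> real poly" where
  "charpoly U A = (\<Sum>p | p permutes U. of_int (sign p) *
      (\<Prod>i\<in>U. (if p i = i then [:- A i i, 1:] else [:- A i (p i):])))"

definition spectrum_ms :: "'a set \<Rightarrow> ('a \<Rightarrow> 'a \<Rightarrow> real) \<Rightarrow> complex multiset" where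
  "spectrum_ms U A = proots (map_poly complex_of_real (charpoly U A))"

definition path_adj :: "nat \<Rightarrow> nat \<Rightarrow> bool" where
  "path_adj i j \<longleftrightarrow> i = j + 1 \<or> j = i + 1"

definition path_verts :: "nat \<Rightarrow> nat set" where
  "path_verts n = {1..n}"

definition PH :: "'a set \<Rightarrow> ('a \<Rightarrow> 'a \<Rightarrow> bool) \<Rightarrow> 'a \<Rightarrow> (nat \<Rightarrow> nat \<Rightarrow> real)
                   \<Rightarrow> ('a \<Rightarrow> 'a \<Rightarrow> real) set" where
  "PH V adj r C =
    (let H = vheight V adj r r; pr = (\<lambda>v. H + 1 - vheight V adj r v) in
     {A. in_R V adj A \<and>
         (\<forall>v\<in>V. A v v = C (pr v) (pr v)) \<and>
         (\<forall>v\<in>V. \<not> is_leaf V adj r v \<longrightarrow>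
            (\<Sum>u | u \<in> V \<and> is_child adj r u v. A v u * A u v)
              = C (pr v) (pr v + 1) * C (pr v + 1) (pr v))})"

end

theory Submission
  imports Defs
begin


definition ent :: "('a \<Rightarrow> 'a \<Rightarrow> real) \<Rightarrow> 'a \<Rightarrow> 'a \<Rightarrow> real poly" where
  "ent A i j = (if j = i then [:- A i i, 1:] else [:- A i j:])"

definition trm :: "'a set \<Rightarrow> ('a \<Rightarrow> 'a \<Rightarrow> real) \<Rightarrow> ('a \<Rightarrow> 'a) \<Rightarrow> real poly" where
  "trm U A p = of_int (sign p) * (\<Prod>i\<in>U. ent A i (p i))"

lemma charpoly_trm: "charpoly U A = (\<Sum>p\<in>{p. p permutes U}. trm U A p)"
  unfolding charpoly_def trm_def ent_def by simp

lemma charpoly_empty: "charpoly {} A = 1"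
  by (simp add: charpoly_def)

lemma charpoly_single: "charpoly {v} A = [:- A v v, 1:]"
  by (simp add: charpoly_def)

lemma permutes_shrink:
  assumes "q permutes S" "\<And>x. x \<in> S - T \<Longrightarrow> q x = x"
  shows "q permutes T"
proof -
  have "\<forall>x. x \<notin> T \<longrightarrow> q x = x"
  proof (intro allI impI)
    fix x assume "x \<notin> T"
    show "q x = x"
    proof (cases "x \<in> S")
      case True then show ?thesis using assms(2) \<open>x \<notin> T\<close> by blast
    next
      case False then show ?thesis using assms(1) permutes_not_in by fast
    qed
  qed
  moreover have "\<forall>y. \<exists>!x. q x = y" using assms(1) unfolding permutes_def by blast
  ultimately show ?thesis unfolding permutes_def by blast
qed

lemma perm_decomp:
  assumes fin: "finite U1" "finite U2" and disj: "U1 \<inter> U2 = {}"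
    and q: "q permutes (U1 \<union> U2)" and inv: "\<And>i. i \<in> U1 \<Longrightarrow> q i \<in> U1"
  shows "\<exists>p1 p2. p1 permutes U1 \<and> p2 permutes U2 \<and> q = p1 \<circ> p2"
proof -
  have injU: "inj_on q (U1 \<union> U2)" using q permutes_inj_on by blast
  have im1: "q ` U1 = U1"
    by (rule endo_inj_surj) (use fin inv injU in \<open>auto intro: inj_on_subset\<close>)
  have imU: "q ` (U1 \<union> U2) = U1 \<union> U2" using q permutes_image by blast
  have im2: "q ` U2 = U2"
  proof -
    have "q ` U2 = q ` (U1 \<union> U2) - q ` U1"
      using injU disj by (auto simp: inj_on_def)
    then show ?thesis using im1 imU disj by auto
  qed
  have b1: "bij_betw q U1 U1" using im1 injU by (auto simp: bij_betw_def intro: inj_on_subset)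
  have b2: "bij_betw q U2 U2" using im2 injU by (auto simp: bij_betw_def intro: inj_on_subset)
  have "q = restrict_id q U1 \<circ> restrict_id q U2"
  proof
    fix x show "q x = (restrict_id q U1 \<circ> restrict_id q U2) x"
    proof (cases "x \<in> U2")
      case True then have "q x \<in> U2" using im2 by auto
      then have "q x \<notin> U1" using disj by blast
      then show ?thesis using True disj \<open>q x \<in> U2\<close> by (simp add: restrict_id_def)
    next
      case False
      then show ?thesis using permutes_not_in[OF q] by (cases "x \<in> U1") auto
    qed
  qed
  then show ?thesis using permutes_restrict_id[OF b1] permutes_restrict_id[OF b2] by blast
qed

lemma trm_compose:
  assumes "finite W1" "finite W2" "W1 \<inter> W2 = {}" "p1 permutes W1" "p2 permutes W2"
  shows "trm (W1 \<union> W2) A (p1 \<circ> p2) = trm W1 A p1 * trm W2 A p2"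
    and "(p1 \<circ> p2) permutes (W1 \<union> W2)"
proof -
  have pp1: "permutation p1" "permutation p2"
    using permutes_imp_permutation[OF assms(1,4)] permutes_imp_permutation[OF assms(2,5)] .
  have s: "sign (p1 \<circ> p2) = sign p1 * sign p2" using sign_compose[OF pp1] .
  have e1: "(p1 \<circ> p2) i = p1 i" if "i \<in> W1" for i
  proof -
    have "i \<notin> W2" using that assms(3) by blast
    then have "p2 i = i" using permutes_not_in[OF assms(5)] by simp
    then show ?thesis by simp
  qed
  have e2: "(p1 \<circ> p2) i = p2 i" if "i \<in> W2" for i
  proof -
    have "p2 i \<in> W2" using that permutes_in_image[OF assms(5)] by simp
    then have "p2 i \<notin> W1" using assms(3) by blast
    then have "p1 (p2 i) = p2 i" using permutes_not_in[OF assms(4)] by simp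
    then show ?thesis by simp
  qed
  have "(\<Prod>i\<in>W1 \<union> W2. ent A i ((p1 \<circ> p2) i)) =
     (\<Prod>i\<in>W1. ent A i ((p1 \<circ> p2) i)) * (\<Prod>i\<in>W2. ent A i ((p1 \<circ> p2) i))"
    using assms(1-3) by (rule prod.union_disjoint)
  also have "\<dots> = (\<Prod>i\<in>W1. ent A i (p1 i)) * (\<Prod>i\<in>W2. ent A i (p2 i))"
    using e1 e2 by (metis (no_types, lifting) prod.cong)
  finally show "trm (W1 \<union> W2) A (p1 \<circ> p2) = trm W1 A p1 * trm W2 A p2"
    unfolding trm_def s by (simp add: mult_ac)
  show "(p1 \<circ> p2) permutes (W1 \<union> W2)"
    by (rule permutes_compose[OF permutes_subset[OF assms(5)] permutes_subset[OF assms(4)]]) auto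
qed

lemma comp_inj:
  assumes "W1 \<inter> W2 = {}"
  shows "inj_on (\<lambda>(p1,p2). p1 \<circ> p2) ({p. p permutes W1} \<times> {p. p permutes W2})"
proof (rule inj_onI, clarsimp)
  fix p1 p2 q1 q2
  assume h: "p1 permutes W1" "p2 permutes W2" "q1 permutes W1" "q2 permutes W2" "p1 \<circ> p2 = q1 \<circ> q2"
  have L: "(f \<circ> g) x = f x" if "f permutes W1" "g permutes W2" "x \<in> W1" for f g x
  proof -
    have "x \<notin> W2" using that assms by blast
    then show ?thesis using permutes_not_in[OF that(2)] by simp
  qed
  have R: "(f \<circ> g) x = g x" if "f permutes W1" "g permutes W2" "x \<in> W2" for f g x
  proof -
    have "g x \<in> W2" using that(3) permutes_in_image[OF that(2)] by simp
    then have "g x \<notin> W1" using assms by blast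
    then show ?thesis using permutes_not_in[OF that(1)] by simp
  qed
  have "p1 = q1"
  proof
    fix x show "p1 x = q1 x"
      using L[OF h(1,2), of x] L[OF h(3,4), of x] h(5) permutes_not_in[OF h(1)] permutes_not_in[OF h(3)]
      by (cases "x \<in> W1") auto
  qed
  moreover have "p2 = q2"
  proof
    fix x show "p2 x = q2 x"
      using R[OF h(1,2), of x] R[OF h(3,4), of x] h(5) permutes_not_in[OF h(2)] permutes_not_in[OF h(4)]
      by (cases "x \<in> W2") auto
  qed
  ultimately show "p1 = q1 \<and> p2 = q2" by blast
qed

lemma charpoly_mult_sum:
  assumes "finite W1" "finite W2" "W1 \<inter> W2 = {}"
  shows "charpoly W1 A * charpoly W2 A =
    sum (trm (W1 \<union> W2) A) ((\<lambda>(p1,p2). p1 \<circ> p2) ` ({p. p permutes W1} \<times> {p. p permutes W2}))"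
proof -
  have "charpoly W1 A * charpoly W2 A =
      (\<Sum>p1\<in>{p. p permutes W1}. \<Sum>p2\<in>{p. p permutes W2}. trm W1 A p1 * trm W2 A p2)"
    unfolding charpoly_trm by (rule sum_product)
  also have "\<dots> = (\<Sum>(p1,p2)\<in>{p. p permutes W1} \<times> {p. p permutes W2}. trm W1 A p1 * trm W2 A p2)"
    by (rule sum.cartesian_product)
  also have "\<dots> = (\<Sum>(p1,p2)\<in>{p. p permutes W1} \<times> {p. p permutes W2}. trm (W1 \<union> W2) A (p1 \<circ> p2))"
    by (rule sum.cong) (use trm_compose(1)[OF assms] in auto)
  also have "\<dots> = sum (trm (W1 \<union> W2) A) ((\<lambda>(p1,p2). p1 \<circ> p2) ` ({p. p permutes W1} \<times> {p. p permutes W2}))"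
    unfolding sum.reindex[OF comp_inj[OF assms(3)]] by (rule sum.cong) auto
  finally show ?thesis .
qed

lemma comp_image_permutes:
  assumes "finite W1" "finite W2" "W1 \<inter> W2 = {}"
  shows "(\<lambda>(p1,p2). p1 \<circ> p2) ` ({p. p permutes W1} \<times> {p. p permutes W2}) \<subseteq> {p. p permutes (W1 \<union> W2)}"
proof
  fix q assume "q \<in> (\<lambda>(p1,p2). p1 \<circ> p2) ` ({p. p permutes W1} \<times> {p. p permutes W2})"
  then obtain p1 p2 where "p1 permutes W1" "p2 permutes W2" "q = p1 \<circ> p2" by auto
  then show "q \<in> {p. p permutes (W1 \<union> W2)}" using trm_compose(2)[OF assms] by blast
qed

lemma trm_transp:
  assumes "finite W" "a \<notin> W" "b \<notin> W" "a \<noteq> b" "q permutes W"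
  shows "trm (insert a (insert b W)) A (Transposition.transpose a b \<circ> q) = - ([:A a b * A b a:] * trm W A q)"
proof -
  let ?t = "Transposition.transpose a b"
  have pq: "permutation q" using permutes_imp_permutation[OF assms(1,5)] .
  have s: "sign (?t \<circ> q) = - sign q"
    using sign_compose[OF permutation_swap_id pq] assms(4) by (simp add: sign_swap_id)
  have qa: "q a = a" using permutes_not_in[OF assms(5) assms(2)] .
  have qb: "q b = b" using permutes_not_in[OF assms(5) assms(3)] .
  have qi: "(?t \<circ> q) i = q i" if "i \<in> W" for i
  proof -
    have "q i \<in> W" using that permutes_in_image[OF assms(5)] by simp
    then have "q i \<noteq> a" "q i \<noteq> b" using assms(2,3) by auto
    then show ?thesis by simp
  qed
  have "(\<Prod>i\<in>insert a (insert b W). ent A i ((?t \<circ> q) i)) =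
      ent A a b * (ent A b a * (\<Prod>i\<in>W. ent A i ((?t \<circ> q) i)))"
    using assms(1-4) qa qb by simp
  also have "(\<Prod>i\<in>W. ent A i ((?t \<circ> q) i)) = (\<Prod>i\<in>W. ent A i (q i))"
    using qi by (metis (no_types, lifting) prod.cong)
  finally have X: "(\<Prod>i\<in>insert a (insert b W). ent A i ((?t \<circ> q) i)) =
      ent A a b * (ent A b a * (\<Prod>i\<in>W. ent A i (q i)))" .
  have Y: "ent A a b * ent A b a = [:A a b * A b a:]"
    using assms(4) by (simp add: ent_def)
  have "(\<Prod>i\<in>insert a (insert b W). ent A i ((?t \<circ> q) i)) =
      [:A a b * A b a:] * (\<Prod>i\<in>W. ent A i (q i))" unfolding X Y[symmetric] by (simp add: mult.assoc)
  then show ?thesis unfolding trm_def s by simp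
qed

lemma cp_cut:
  fixes A :: "'a \<Rightarrow> 'a \<Rightarrow> real"
  assumes fin: "finite U1" "finite U2" and disj: "U1 \<inter> U2 = {}" and a: "a \<in> U1" and b: "b \<in> U2"
    and zero: "\<And>i j. i \<in> U1 \<Longrightarrow> j \<in> U2 \<Longrightarrow> (i,j) \<noteq> (a,b) \<Longrightarrow> A i j = 0 \<and> A j i = 0"
  shows "charpoly (U1 \<union> U2) A = charpoly U1 A * charpoly U2 A
     - [:A a b * A b a:] * (charpoly (U1 - {a}) A * charpoly (U2 - {b}) A)"
proof -
  define \<tau> where "\<tau> = Transposition.transpose a b"
  define c where "c = (\<lambda>(p1::'a\<Rightarrow>'a,p2::'a\<Rightarrow>'a). p1 \<circ> p2)"
  define S1 where "S1 = c ` ({p. p permutes U1} \<times> {p. p permutes U2})"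
  define S0 where "S0 = c ` ({p. p permutes (U1-{a})} \<times> {p. p permutes (U2-{b})})"
  define S2 where "S2 = (\<lambda>q. \<tau> \<circ> q) ` S0"
  define U where "U = U1 \<union> U2"
  define U' where "U' = (U1-{a}) \<union> (U2-{b})"
  have ab: "a \<noteq> b" using a b disj by blast
  have f0: "finite (U1 - {a})" "finite (U2-{b})" "(U1-{a}) \<inter> (U2-{b}) = {}" using fin disj by auto
  have finP: "finite {p. p permutes U}" using fin unfolding U_def by (simp add: finite_permutations)
  have S1P: "S1 \<subseteq> {p. p permutes U}" unfolding S1_def c_def U_def by (rule comp_image_permutes[OF fin disj])
  have S0P: "S0 \<subseteq> {p. p permutes U'}" unfolding S0_def c_def U'_def by (rule comp_image_permutes[OF f0])
  have UU: "U = insert a (insert b U')" using a b unfolding U_def U'_def by auto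
  have aU': "a \<notin> U'" "b \<notin> U'" "finite U'" using disj fin a b unfolding U'_def by auto
  have tU: "\<tau> permutes U" unfolding \<tau>_def U_def using a b by (simp add: permutes_swap_id)
  have U'U: "U' \<subseteq> U" unfolding U_def U'_def by auto
  have S2P: "S2 \<subseteq> {p. p permutes U}"
  proof
    fix p assume "p \<in> S2"
    then obtain q where q: "q \<in> S0" "p = \<tau> \<circ> q" unfolding S2_def by auto
    have "q permutes U'" using S0P q(1) by auto
    then have "q permutes U" using permutes_subset[OF _ U'U] by simp
    then have "\<tau> \<circ> q permutes U" using permutes_compose[OF _ tU] by simp
    then show "p \<in> {p. p permutes U}" using q(2) by simp
  qed
  have disj12: "S1 \<inter> S2 = {}"
  proof (rule ccontr)
    assume "S1 \<inter> S2 \<noteq> {}"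
    then obtain p where p: "p \<in> S1" "p \<in> S2" by blast
    from p(1) obtain p1 p2 where pp: "p1 permutes U1" "p2 permutes U2" "p = p1 \<circ> p2"
      unfolding S1_def c_def by auto
    have "a \<notin> U2" using a disj by blast
    then have "p2 a = a" using permutes_not_in[OF pp(2)] by simp
    then have "p a \<in> U1" using pp(3) a permutes_in_image[OF pp(1)] by simp
    from p(2) obtain q where q: "q \<in> S0" "p = \<tau> \<circ> q" unfolding S2_def by auto
    have "q permutes U'" using S0P q(1) by auto
    then have "q a = a" using permutes_not_in aU'(1) by metis
    then have "p a = b" using q(2) unfolding \<tau>_def by simp
    then show False using \<open>p a \<in> U1\<close> b disj by blast
  qed
  have zeroP: "trm U A p = 0" if pP: "p permutes U" and nS: "p \<notin> S1 \<union> S2" for p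
  proof (rule ccontr)
    assume "trm U A p \<noteq> 0"
    then have "(\<Prod>i\<in>U. ent A i (p i)) \<noteq> 0" unfolding trm_def by auto
    then have "\<forall>i\<in>U. ent A i (p i) \<noteq> 0"
      using fin unfolding U_def by (simp add: prod_zero_iff)
    then have nz: "A i (p i) \<noteq> 0" if "i \<in> U" "p i \<noteq> i" for i
      using that unfolding ent_def by (auto simp: pCons_eq_0_iff)
    have pin: "p x \<in> U" if "x \<in> U" for x using permutes_in_image[OF pP] that by simp
    have injp: "inj p" using permutes_inj[OF pP] .
    have c1: "i = a \<and> p i = b" if "i \<in> U1" "p i \<in> U2" for i
    proof -
      have "i \<notin> U2" using that(1) disj by blast
      then have "p i \<noteq> i" using that(2) by auto
      moreover have "i \<in> U" unfolding U_def using that by simp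
      ultimately have "A i (p i) \<noteq> 0" using nz by simp
      then show ?thesis using zero[OF that] by (cases "i = a \<and> p i = b") auto
    qed
    have c2: "j = b \<and> p j = a" if "j \<in> U2" "p j \<in> U1" for j
    proof -
      have "j \<notin> U1" using that(1) disj by blast
      then have "p j \<noteq> j" using that(2) by auto
      moreover have "j \<in> U" unfolding U_def using that by simp
      ultimately have "A j (p j) \<noteq> 0" using nz by simp
      then show ?thesis using zero[OF that(2) that(1)] by (cases "p j = a \<and> j = b") auto
    qed
    show False
    proof (cases "p a \<in> U1")
      case True
      have "p i \<in> U1" if "i \<in> U1" for i
      proof (rule ccontr)
        assume "p i \<notin> U1"
        then have "p i \<in> U2" using pin[of i] that unfolding U_def by blast
        then have "i = a" using c1 that by blast
        then show False using True \<open>p i \<notin> U1\<close> by simp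
      qed
      then obtain p1 p2 where "p1 permutes U1" "p2 permutes U2" "p = p1 \<circ> p2"
        using perm_decomp[OF fin disj, of p] pP unfolding U_def by blast
      then have "p \<in> S1" unfolding S1_def c_def by force
      then show False using nS by blast
    next
      case False
      then have "p a \<in> U2" using pin[of a] a unfolding U_def by blast
      then have pab: "p a = b" using c1 a by blast
      have "\<exists>j\<in>U2. p j \<notin> U2"
      proof (rule ccontr)
        assume "\<not> (\<exists>j\<in>U2. p j \<notin> U2)"
        then have "p ` U2 \<subseteq> U2" by blast
        then have "p ` U2 = U2" using endo_inj_surj[OF fin(2)] injp by (simp add: inj_on_subset)
        then obtain j where "j \<in> U2" "p j = b" using b by (metis imageE)
        then have "j = a" using pab injp by (metis injD)
        then show False using \<open>j \<in> U2\<close> a disj by blast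
      qed
      then obtain j where j: "j \<in> U2" "p j \<notin> U2" by blast
      then have "p j \<in> U1" using pin[of j] unfolding U_def by blast
      then have pba: "p b = a" using c2 j(1) by blast
      define q where "q = \<tau> \<circ> p"
      have qU: "q permutes U" unfolding q_def using permutes_compose[OF pP tU] .
      have qa: "q a = a" unfolding q_def \<tau>_def using pab by simp
      have qb: "q b = b" unfolding q_def \<tau>_def using pba by simp
      have qU': "q permutes U'"
        by (rule permutes_shrink[OF qU]) (use qa qb UU in auto)
      have qinv: "q i \<in> U1 - {a}" if "i \<in> U1 - {a}" for i
      proof -
        have "p i \<in> U" using pin that unfolding U_def by blast
        moreover have "p i \<notin> U2" using c1 that by blast
        ultimately have "p i \<in> U1" unfolding U_def by blast
        moreover have "i \<noteq> b" using that b disj by blast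
        then have "p i \<noteq> a" using pba injp by (metis injD)
        moreover have "p i \<noteq> b" using \<open>p i \<in> U1\<close> b disj by blast
        ultimately show ?thesis unfolding q_def \<tau>_def by simp
      qed
      obtain p1 p2 where p12: "p1 permutes (U1-{a})" "p2 permutes (U2-{b})" "q = p1 \<circ> p2"
        using perm_decomp[OF f0, of q] qU' qinv unfolding U'_def by blast
      have "p = \<tau> \<circ> q" unfolding q_def \<tau>_def by (simp add: fun_eq_iff)
      then have "p \<in> S2" using p12 unfolding S2_def S0_def c_def by force
      then show False using nS by blast
    qed
  qed
  have "charpoly U A = sum (trm U A) {p. p permutes U}" by (rule charpoly_trm)
  also have "\<dots> = sum (trm U A) (S1 \<union> S2)"
    by (rule sum.mono_neutral_right[OF finP]) (use S1P S2P zeroP in auto)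
  also have "\<dots> = sum (trm U A) S1 + sum (trm U A) S2"
    by (rule sum.union_disjoint) (use finite_subset[OF S1P finP] finite_subset[OF S2P finP] disj12 in auto)
  also have "sum (trm U A) S1 = charpoly U1 A * charpoly U2 A"
    using charpoly_mult_sum[OF fin disj] unfolding S1_def c_def U_def by simp
  also have "sum (trm U A) S2 = - [:A a b * A b a:] * (charpoly (U1 - {a}) A * charpoly (U2 - {b}) A)"
  proof -
    have inj: "inj_on (\<lambda>q. \<tau> \<circ> q) S0"
    proof (rule inj_onI)
      fix x y assume "\<tau> \<circ> x = \<tau> \<circ> y"
      then have "\<tau> \<circ> (\<tau> \<circ> x) = \<tau> \<circ> (\<tau> \<circ> y)" by simp
      then show "x = y" unfolding \<tau>_def by (simp add: fun_eq_iff)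
    qed
    have "sum (trm U A) S2 = (\<Sum>q\<in>S0. trm U A (\<tau> \<circ> q))"
      unfolding S2_def by (simp add: sum.reindex[OF inj])
    also have "\<dots> = (\<Sum>q\<in>S0. - ([:A a b * A b a:] * trm U' A q))"
    proof (rule sum.cong)
      fix q assume "q \<in> S0"
      then have "q permutes U'" using S0P by auto
      then show "trm U A (\<tau> \<circ> q) = - ([:A a b * A b a:] * trm U' A q)"
        unfolding UU \<tau>_def using trm_transp[OF aU'(3) aU'(1) aU'(2) ab] by blast
    qed simp
    also have "\<dots> = - [:A a b * A b a:] * sum (trm U' A) S0"
      by (simp add: sum_negf sum_distrib_left)
    also have "sum (trm U' A) S0 = charpoly (U1 - {a}) A * charpoly (U2 - {b}) A"
      using charpoly_mult_sum[OF f0] unfolding S0_def c_def U'_def by simp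
    finally show ?thesis .
  qed
  finally show ?thesis unfolding U_def by simp
qed



lemma walk_0[simp]: "walk_len adj 0 u v \<longleftrightarrow> u = v"
  by (simp add: walk_len_def)

lemma walk_Suc: "walk_len adj (Suc n) u v \<longleftrightarrow> (\<exists>w. walk_len adj n u w \<and> adj w v)"
  by (simp add: walk_len_def relcompp_apply)

lemma walk_Suc_left: "walk_len adj (Suc n) u v \<longleftrightarrow> (\<exists>w. adj u w \<and> walk_len adj n w v)"
  unfolding walk_len_def relpowp_Suc_left by (simp add: relcompp_apply)

lemma walk_add: "walk_len adj m u v \<Longrightarrow> walk_len adj n v w \<Longrightarrow> walk_len adj (m + n) u w"
  unfolding walk_len_def relpowp_add by (auto simp: relcompp_apply)

lemma gdist_le: "walk_len adj n u v \<Longrightarrow> gdist adj u v \<le> n"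
  unfolding gdist_def by (rule Least_le)

lemma gdist_walk: "\<exists>n. walk_len adj n u v \<Longrightarrow> walk_len adj (gdist adj u v) u v"
  unfolding gdist_def by (rule LeastI_ex)

lemma gdist_self[simp]: "gdist adj u u = 0"
  using gdist_le[of adj 0 u u] by simp

locale hedge_ctx =
  fixes V :: "'a set" and adj :: "'a \<Rightarrow> 'a \<Rightarrow> bool" and r :: 'a
  assumes hedge: "is_hedge V adj r"
begin

lemma finV: "finite V" and rV: "r \<in> V" and adjV: "adj u v \<Longrightarrow> u \<in> V \<and> v \<in> V"
  and sym: "adj u v \<Longrightarrow> adj v u" and irr: "\<not> adj u u"
  and conn: "u \<in> V \<Longrightarrow> v \<in> V \<Longrightarrow> \<exists>n. walk_len adj n u v"
  and cardE: "card (graph_edges V adj) + 1 = card V"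
  using hedge unfolding is_hedge_def is_tree_def is_graph_def connected_graph_def by blast+

definition d :: "'a \<Rightarrow> nat" where "d v = gdist adj r v"

lemma walk_d: "v \<in> V \<Longrightarrow> walk_len adj (d v) r v"
  unfolding d_def by (rule gdist_walk[OF conn[OF rV]])

lemma d_r[simp]: "d r = 0" unfolding d_def by simp

lemma d0: "v \<in> V \<Longrightarrow> d v = 0 \<Longrightarrow> v = r"
  using walk_d by fastforce

lemma gdist_adj: "adj u v \<Longrightarrow> gdist adj u v = 1"
proof -
  assume a: "adj u v"
  have "walk_len adj (Suc 0) u v" using a by (simp add: walk_Suc)
  then have "gdist adj u v \<le> 1" using gdist_le by fastforce
  moreover have "gdist adj u v \<noteq> 0"
  proof
    assume "gdist adj u v = 0"
    then have "walk_len adj 0 u v" using gdist_walk[of adj u v] a adjV conn by (metis)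
    then show False using a irr by simp
  qed
  ultimately show ?thesis by simp
qed

lemma d_tri: "v \<in> V \<Longrightarrow> w \<in> V \<Longrightarrow> d w \<le> d v + gdist adj v w"
proof -
  assume "v \<in> V" "w \<in> V"
  have "walk_len adj (d v + gdist adj v w) r w"
    by (rule walk_add[OF walk_d[OF \<open>v \<in> V\<close>] gdist_walk[OF conn[OF \<open>v \<in> V\<close> \<open>w \<in> V\<close>]]])
  then show ?thesis unfolding d_def by (rule gdist_le)
qed

lemma d_adj: "adj x y \<Longrightarrow> d y \<le> d x + 1"
  using d_tri[of x y] gdist_adj adjV by fastforce

lemma parent_ex: "v \<in> V \<Longrightarrow> v \<noteq> r \<Longrightarrow> \<exists>x. adj x v \<and> d x + 1 = d v"
proof -
  assume v: "v \<in> V" "v \<noteq> r"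
  have "d v \<noteq> 0" using d0 v by blast
  then obtain m where m: "d v = Suc m" using not0_implies_Suc by blast
  then obtain w where w: "walk_len adj m r w" "adj w v" using walk_d[OF v(1)] walk_Suc by metis
  have "d w \<le> m" unfolding d_def using gdist_le w(1) .
  moreover have "d v \<le> d w + 1" using d_adj w(2) .
  ultimately show ?thesis using w(2) m by (intro exI[of _ w]) simp
qed

definition par :: "'a \<Rightarrow> 'a" where "par v = (SOME x. adj x v \<and> d x + 1 = d v)"

lemma par: "v \<in> V \<Longrightarrow> v \<noteq> r \<Longrightarrow> adj (par v) v \<and> d (par v) + 1 = d v"
  unfolding par_def using someI_ex[OF parent_ex] by blast

lemma finE: "finite (graph_edges V adj)"
proof -
  have "graph_edges V adj \<subseteq> (\<lambda>(u,v). {u,v}) ` (V \<times> V)"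
    unfolding graph_edges_def by auto
  then show ?thesis using finite_subset finV by blast
qed

lemma edges_par: "graph_edges V adj = (\<lambda>v. {par v, v}) ` (V - {r})"
proof -
  let ?f = "\<lambda>v. {par v, v}"
  have inj: "inj_on ?f (V - {r})"
  proof (rule inj_onI)
    fix v w assume vw: "v \<in> V - {r}" "w \<in> V - {r}" "{par v, v} = {par w, w}"
    have pv: "d (par v) + 1 = d v" using par vw(1) by blast
    have pw: "d (par w) + 1 = d w" using par vw(2) by blast
    from vw(3) have "(par v = par w \<and> v = w) \<or> (par v = w \<and> v = par w)"
      by (simp add: doubleton_eq_iff)
    then show "v = w" using pv pw by auto
  qed
  have sub: "?f ` (V - {r}) \<subseteq> graph_edges V adj"
  proof
    fix e assume "e \<in> ?f ` (V - {r})"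
    then obtain v where v: "v \<in> V - {r}" "e = {par v, v}" by blast
    have "adj (par v) v" using par v(1) by blast
    then show "e \<in> graph_edges V adj" unfolding graph_edges_def using v adjV by blast
  qed
  have "card (?f ` (V - {r})) = card (V - {r})" using card_image[OF inj] .
  also have "\<dots> = card V - 1" using rV finV by simp
  also have "\<dots> = card (graph_edges V adj)" using cardE by simp
  finally show ?thesis using card_subset_eq[OF finE sub] by simp
qed

lemma adj_cases: "adj x y \<Longrightarrow> (y \<in> V \<and> y \<noteq> r \<and> x = par y) \<or> (x \<in> V \<and> x \<noteq> r \<and> y = par x)"
proof -
  assume a: "adj x y"
  then have "{x, y} \<in> graph_edges V adj" unfolding graph_edges_def using adjV by blast
  then obtain v where v: "v \<in> V - {r}" "{x, y} = {par v, v}" using edges_par by blast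
  then have "(x = par v \<and> y = v) \<or> (x = v \<and> y = par v)" by (simp add: doubleton_eq_iff)
  then show ?thesis using v(1) by auto
qed

lemma d_par: "v \<in> V \<Longrightarrow> v \<noteq> r \<Longrightarrow> d (par v) + 1 = d v" using par by blast
lemma par_V: "v \<in> V \<Longrightarrow> v \<noteq> r \<Longrightarrow> par v \<in> V" using par adjV by blast

lemma par_unique: "adj x v \<Longrightarrow> d x + 1 = d v \<Longrightarrow> x = par v"
proof -
  assume a: "adj x v" "d x + 1 = d v"
  from adj_cases[OF a(1)] show ?thesis
  proof
    assume "x \<in> V \<and> x \<noteq> r \<and> v = par x"
    then have "d v + 1 = d x" using d_par by blast
    then show ?thesis using a(2) by simp
  qed blast
qed

definition ch :: "'a \<Rightarrow> 'a set" where "ch v = {y \<in> V. y \<noteq> r \<and> par y = v}"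

lemma ch_d: "y \<in> ch v \<Longrightarrow> d y = d v + 1" unfolding ch_def using d_par by auto
lemma ch_V: "ch v \<subseteq> V" unfolding ch_def by auto
lemma fin_ch: "finite (ch v)" using finite_subset[OF ch_V finV] .

lemma is_child_iff: "is_child adj r y z \<longleftrightarrow> y \<in> ch z"
proof
  assume "is_child adj r y z"
  then have a: "adj y z" "gdist adj r y = gdist adj r z + gdist adj z y" unfolding is_child_def by auto
  have "gdist adj z y = 1" using gdist_adj sym a(1) by blast
  then have dd: "d z + 1 = d y" using a(2) unfolding d_def by simp
  have "y \<in> V" using adjV a(1) by blast
  moreover have "y \<noteq> r" using dd by auto
  moreover have "z = par y" using par_unique sym[OF a(1)] dd by blast
  ultimately show "y \<in> ch z" unfolding ch_def by simp
next
  assume "y \<in> ch z"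
  then have y: "y \<in> V" "y \<noteq> r" "par y = z" unfolding ch_def by auto
  then have "adj z y" "d z + 1 = d y" using par by blast+
  moreover have "gdist adj z y = 1" using gdist_adj \<open>adj z y\<close> by blast
  ultimately show "is_child adj r y z" unfolding is_child_def d_def using sym by auto
qed

abbreviation anc :: "nat \<Rightarrow> 'a \<Rightarrow> 'a" where "anc k w \<equiv> (par ^^ k) w"

lemma anc: "w \<in> V \<Longrightarrow> k \<le> d w \<Longrightarrow> anc k w \<in> V \<and> d (anc k w) = d w - k"
proof (induction k)
  case 0 then show ?case by simp
next
  case (Suc k)
  then have IH: "anc k w \<in> V" "d (anc k w) = d w - k" by auto
  then have "anc k w \<noteq> r" using Suc.prems by auto
  then have "par (anc k w) \<in> V" "d (par (anc k w)) + 1 = d (anc k w)"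
    using par_V d_par IH by blast+
  then show ?case using IH Suc.prems by simp
qed

lemma ch_r: "V \<noteq> {r} \<Longrightarrow> ch r \<noteq> {}"
proof -
  assume "V \<noteq> {r}"
  then obtain w where w: "w \<in> V" "w \<noteq> r" using rV by blast
  then have dw: "d w \<ge> 1" using d0 by (metis less_one not_le)
  define c where "c = anc (d w - 1) w"
  have c: "c \<in> V" "d c = 1" unfolding c_def using anc[OF w(1), of "d w - 1"] dw by auto
  then have cr: "c \<noteq> r" by auto
  then have "par c \<in> V" "d (par c) = 0" using par_V d_par c by (blast, force)
  then have "par c = r" using d0 by blast
  then show ?thesis using c cr unfolding ch_def by blast
qed

lemma leaf_iff: "is_leaf V adj r v \<longleftrightarrow> v \<in> V \<and> ch v = {}"
proof (cases "V = {r}")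
  case True
  then have "ch v = {}" using ch_V unfolding ch_def by auto
  then show ?thesis using True unfolding is_leaf_def by auto
next
  case False
  show ?thesis
  proof (cases "v \<in> V \<and> v \<noteq> r")
    case True
    have nb: "{u \<in> V. adj v u} = insert (par v) (ch v)"
    proof (intro set_eqI iffI)
      fix u assume "u \<in> {u \<in> V. adj v u}"
      then have "adj v u" by simp
      from adj_cases[OF this] show "u \<in> insert (par v) (ch v)" unfolding ch_def by auto
    next
      fix u assume "u \<in> insert (par v) (ch v)"
      then show "u \<in> {u \<in> V. adj v u}"
      proof
        assume "u = par v" then show ?thesis using par[of v] True sym adjV by blast
      next
        assume "u \<in> ch v" then show ?thesis unfolding ch_def using par sym by blast
      qed
    qed
    have "par v \<notin> ch v" using ch_d d_par True by fastforce
    then have "degree V adj v = Suc (card (ch v))" unfolding degree_def nb using fin_ch by simp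
    then show ?thesis using False True unfolding is_leaf_def using fin_ch by auto
  next
    case False2: False
    then show ?thesis using False ch_r unfolding is_leaf_def by auto
  qed
qed

definition desc :: "'a \<Rightarrow> 'a set" where
  "desc u = {w \<in> V. d u \<le> d w \<and> anc (d w - d u) w = u}"

lemma desc_V: "desc u \<subseteq> V" unfolding desc_def by auto
lemma fin_desc: "finite (desc u)" using finite_subset[OF desc_V finV] .
lemma desc_self: "u \<in> V \<Longrightarrow> u \<in> desc u" unfolding desc_def by simp
lemma desc_ge: "w \<in> desc u \<Longrightarrow> d u \<le> d w" unfolding desc_def by simp

lemma desc_ch: "w \<in> desc u \<Longrightarrow> y \<in> ch w \<Longrightarrow> y \<in> desc u"
proof -
  assume w: "w \<in> desc u" and y: "y \<in> ch w"
  have dy: "d y = d w + 1" using ch_d y .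
  have "d y - d u = Suc (d w - d u)" using dy desc_ge[OF w] by simp
  then have "anc (d y - d u) y = anc (Suc (d w - d u)) y" by simp
  also have "\<dots> = anc (d w - d u) (par y)" by (simp only: funpow_Suc_right o_apply)
  also have "par y = w" using y unfolding ch_def by simp
  finally show ?thesis using w y ch_V dy unfolding desc_def by auto
qed

lemma desc_par: "w \<in> desc u \<Longrightarrow> w \<noteq> u \<Longrightarrow> w \<noteq> r \<and> par w \<in> desc u"
proof -
  assume w: "w \<in> desc u" "w \<noteq> u"
  have wV: "w \<in> V" using w desc_V by blast
  have "d u \<noteq> d w" using w unfolding desc_def by auto
  then have lt: "d u < d w" using desc_ge[OF w(1)] by simp
  then have wr: "w \<noteq> r" by auto
  have pd: "d (par w) + 1 = d w" "par w \<in> V" using d_par par_V wV wr by blast+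
  have "anc (d (par w) - d u) (par w) = anc (Suc (d (par w) - d u)) w" by (simp only: funpow_Suc_right o_apply)
  also have "Suc (d (par w) - d u) = d w - d u" using pd lt by simp
  finally show ?thesis using w wr pd lt unfolding desc_def by auto
qed

lemma desc_adj: "w \<in> desc u \<Longrightarrow> adj w x \<Longrightarrow> x \<in> desc u \<or> (w = u \<and> u \<noteq> r \<and> x = par u)"
proof -
  assume w: "w \<in> desc u" and a: "adj w x"
  from adj_cases[OF a] show ?thesis
  proof
    assume "x \<in> V \<and> x \<noteq> r \<and> w = par x"
    then have "x \<in> ch w" unfolding ch_def by simp
    then show ?thesis using desc_ch w by blast
  next
    assume h: "w \<in> V \<and> w \<noteq> r \<and> x = par w"
    show ?thesis
    proof (cases "w = u")
      case True then show ?thesis using h by simp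
    next
      case False then show ?thesis using desc_par w h by blast
    qed
  qed
qed

lemma desc_split: "u \<in> V \<Longrightarrow> desc u = insert u (\<Union>c\<in>ch u. desc c)"
proof (intro set_eqI iffI)
  fix w assume u: "u \<in> V" and w: "w \<in> desc u"
  show "w \<in> insert u (\<Union>c\<in>ch u. desc c)"
  proof (cases "w = u")
    case True then show ?thesis by simp
  next
    case False
    have wV: "w \<in> V" using w desc_V by blast
    have "d u \<noteq> d w" using w False unfolding desc_def by auto
    then have lt: "d u < d w" using desc_ge[OF w] by simp
    define c where "c = anc (d w - d u - 1) w"
    have c: "c \<in> V" "d c = d u + 1" unfolding c_def using anc[OF wV, of "d w - d u - 1"] lt by auto
    then have cr: "c \<noteq> r" by auto
    have "par c = anc (Suc (d w - d u - 1)) w" unfolding c_def by simp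
    also have "Suc (d w - d u - 1) = d w - d u" using lt by simp
    finally have "par c = u" using w unfolding desc_def by simp
    then have "c \<in> ch u" using c cr unfolding ch_def by simp
    moreover have "w \<in> desc c"
    proof -
      have "d w - d c = d w - d u - 1" using c by simp
      then show ?thesis using wV c lt unfolding desc_def c_def by simp
    qed
    ultimately show ?thesis by blast
  qed
next
  fix w assume u: "u \<in> V" and w: "w \<in> insert u (\<Union>c\<in>ch u. desc c)"
  from w show "w \<in> desc u"
  proof
    assume "w = u" then show ?thesis using desc_self u by simp
  next
    assume "w \<in> (\<Union>c\<in>ch u. desc c)"
    then obtain c where c: "c \<in> ch u" "w \<in> desc c" by blast
    have wV: "w \<in> V" using c desc_V by blast
    have dc: "d c = d u + 1" using ch_d c(1) .
    have ge: "d c \<le> d w" using desc_ge c(2) .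
    have e: "d w - d u = Suc (d w - d c)" using dc ge by simp
    have "anc (d w - d u) w = par (anc (d w - d c) w)" unfolding e by simp
    also have "anc (d w - d c) w = c" using c(2) unfolding desc_def by simp
    also have "par c = u" using c(1) unfolding ch_def by simp
    finally show ?thesis using wV dc ge unfolding desc_def by simp
  qed
qed

lemma desc_disj: "c \<in> ch u \<Longrightarrow> c' \<in> ch u \<Longrightarrow> c \<noteq> c' \<Longrightarrow> desc c \<inter> desc c' = {}"
  using ch_d unfolding desc_def by force

lemma u_notin: "c \<in> ch u \<Longrightarrow> u \<notin> desc c"
  using ch_d desc_ge by fastforce

lemma desc_r: "desc r = V"
proof (intro set_eqI iffI)
  fix w assume "w \<in> V"
  then have "anc (d w) w \<in> V" "d (anc (d w) w) = 0" using anc[of w "d w"] by auto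
  then have "anc (d w) w = r" using d0 by blast
  then show "w \<in> desc r" using \<open>w \<in> V\<close> unfolding desc_def by simp
qed (use desc_V in auto)

definition M :: nat where "M = Max (d ` V)"

lemma d_le_M: "v \<in> V \<Longrightarrow> d v \<le> M"
  unfolding M_def using finV by simp

lemma leaf_below: "v \<in> V \<Longrightarrow> \<exists>w. w \<in> desc v \<and> ch w = {}"
proof (induction "M - d v" arbitrary: v rule: less_induct)
  case less
  show ?case
  proof (cases "ch v = {}")
    case True then show ?thesis using desc_self less.prems by blast
  next
    case False
    then obtain c where c: "c \<in> ch v" by blast
    have cV: "c \<in> V" using c ch_V by blast
    have "d c = d v + 1" using ch_d c .
    moreover have "d c \<le> M" using d_le_M cV .
    ultimately have "M - d c < M - d v" by simp
    then obtain w where "w \<in> desc c" "ch w = {}" using less.hyps cV by blast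
    moreover have "w \<in> desc v" using desc_split[OF less.prems] c \<open>w \<in> desc c\<close> by blast
    ultimately show ?thesis by blast
  qed
qed

lemma walk_anc: "w \<in> V \<Longrightarrow> k \<le> d w \<Longrightarrow> walk_len adj k (anc k w) w"
proof (induction k)
  case 0 then show ?case by simp
next
  case (Suc k)
  have x: "anc k w \<in> V" "d (anc k w) = d w - k" using anc[OF Suc.prems(1), of k] Suc.prems(2) by auto
  then have xr: "anc k w \<noteq> r" using Suc.prems(2) by auto
  have "adj (par (anc k w)) (anc k w)" using par x(1) xr by blast
  moreover have "walk_len adj k (anc k w) w" using Suc by simp
  ultimately have "walk_len adj (Suc k) (par (anc k w)) w" unfolding walk_Suc_left by blast
  then show ?case by simp
qed

lemma gdist_desc: "w \<in> desc v \<Longrightarrow> gdist adj v w \<le> d w - d v"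
proof -
  assume w: "w \<in> desc v"
  have "w \<in> V" "anc (d w - d v) w = v" using w desc_V unfolding desc_def by auto
  then have "walk_len adj (d w - d v) v w" using walk_anc[of w "d w - d v"] by simp
  then show ?thesis by (rule gdist_le)
qed

definition D0 :: nat where "D0 = d (SOME w. w \<in> V \<and> ch w = {})"

lemma leaf_D: "v \<in> V \<Longrightarrow> ch v = {} \<Longrightarrow> d v = D0"
proof -
  assume v: "v \<in> V" "ch v = {}"
  define w0 where "w0 = (SOME w. w \<in> V \<and> ch w = {})"
  have ex: "\<exists>w. w \<in> V \<and> ch w = {}" using leaf_below[OF rV] desc_V by blast
  have w0: "w0 \<in> V" "ch w0 = {}" unfolding w0_def using someI_ex[OF ex] by auto
  show ?thesis
  proof (cases "V = {r}")
    case True then show ?thesis using v w0 unfolding D0_def w0_def[symmetric] by auto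
  next
    case False
    then have H: "\<forall>u v. is_leaf V adj r u \<and> is_leaf V adj r v \<longrightarrow> gdist adj r u = gdist adj r v"
      using hedge unfolding is_hedge_def by blast
    have "is_leaf V adj r v" "is_leaf V adj r w0" using v w0 leaf_iff by auto
    then have "gdist adj r v = gdist adj r w0" using H by blast
    then show ?thesis unfolding D0_def w0_def[symmetric] d_def .
  qed
qed

lemma d_le_D: "v \<in> V \<Longrightarrow> d v \<le> D0"
proof -
  assume v: "v \<in> V"
  obtain w where w: "w \<in> desc v" "ch w = {}" using leaf_below[OF v] by blast
  then have "d w = D0" using leaf_D desc_V by blast
  then show ?thesis using desc_ge[OF w(1)] by simp
qed

lemma vheight_eq: "v \<in> V \<Longrightarrow> vheight V adj r v = D0 - d v"
proof -
  assume v: "v \<in> V"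
  let ?S = "{gdist adj v w |w. is_leaf V adj r w}"
  have "?S \<subseteq> gdist adj v ` V" using leaf_iff by auto
  then have fin: "finite ?S" using finV finite_subset by blast
  have lb: "D0 - d v \<le> y" if "y \<in> ?S" for y
  proof -
    obtain w where w: "y = gdist adj v w" "is_leaf V adj r w" using \<open>y \<in> ?S\<close> by blast
    then have wV: "w \<in> V" "ch w = {}" using leaf_iff by auto
    then have "d w = D0" using leaf_D by blast
    then show ?thesis using d_tri[OF v wV(1)] w(1) by simp
  qed
  obtain w where w: "w \<in> desc v" "ch w = {}" using leaf_below[OF v] by blast
  have wV: "w \<in> V" using w desc_V by blast
  have dw: "d w = D0" using leaf_D wV w(2) by blast
  have "gdist adj v w \<le> D0 - d v" using gdist_desc[OF w(1)] dw by simp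
  moreover have "D0 - d v \<le> gdist adj v w" using d_tri[OF v wV] dw by simp
  ultimately have "gdist adj v w = D0 - d v" by simp
  moreover have "is_leaf V adj r w" using leaf_iff wV w(2) by simp
  ultimately have mem: "D0 - d v \<in> ?S" by (metis (mono_tags, lifting) mem_Collect_eq)
  show ?thesis unfolding vheight_def by (rule Min_eqI[OF fin lb mem])
qed

lemma vheight_r: "vheight V adj r r = D0" using vheight_eq[OF rV] by simp

lemma ch_ne: "v \<in> V \<Longrightarrow> d v < D0 \<Longrightarrow> ch v \<noteq> {}"
  using leaf_D by fastforce

lemma ch_lt: "c \<in> ch v \<Longrightarrow> d v < D0"
proof -
  assume c: "c \<in> ch v"
  then have "d c = d v + 1" using ch_d by blast
  moreover have "d c \<le> D0" using d_le_D c ch_V by blast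
  ultimately show ?thesis by simp
qed

end

lemma cp_block:
  fixes A :: "'a \<Rightarrow> 'a \<Rightarrow> real"
  assumes fin: "finite U1" "finite U2" and disj: "U1 \<inter> U2 = {}"
    and zero: "\<And>i j. i \<in> U1 \<Longrightarrow> j \<in> U2 \<Longrightarrow> A i j = 0 \<and> A j i = 0"
  shows "charpoly (U1 \<union> U2) A = charpoly U1 A * charpoly U2 A"
proof (cases "U1 = {} \<or> U2 = {}")
  case True then show ?thesis by (auto simp: charpoly_empty)
next
  case False
  then obtain a b where ab: "a \<in> U1" "b \<in> U2" by blast
  have "A a b = 0" using zero ab by blast
  then show ?thesis using cp_cut[OF fin disj ab] zero by simp
qed

lemma poly_alg:
  fixes G Y Y' F L P1 P2 :: "real poly"
  assumes nz: "P1 \<noteq> 0" and h1: "G * P1 = (L * P1 - [:\<sigma>:] * P2) * F" and h2: "Y * P2 = P1 * Y'"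
  shows "(Y * G - [:x:] * (Y' * F)) * P1 = (L * P1 - [:\<sigma> + x:] * P2) * (Y * F)"
proof -
  have e: "[:\<sigma> + x:] = [:\<sigma>:] + [:x:]" by simp
  have "(Y * G - [:x:] * (Y' * F)) * P1 * P1 = Y * P1 * (G * P1) - [:x:] * F * P1 * (P1 * Y')"
    by (simp add: algebra_simps)
  also have "\<dots> = Y * P1 * ((L * P1 - [:\<sigma>:] * P2) * F) - [:x:] * F * P1 * (Y * P2)"
    using h1 h2 by simp
  also have "\<dots> = (L * P1 - [:\<sigma> + x:] * P2) * (Y * F) * P1"
    by (simp add: algebra_simps smult_add_left)
  finally show ?thesis using nz by simp
qed

locale hedge_mat = hedge_ctx V adj r for V :: "'a set" and adj r +
  fixes C :: "nat \<Rightarrow> nat \<Rightarrow> real" and A :: "'a \<Rightarrow> 'a \<Rightarrow> real"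
  assumes Cpath: "in_R (path_verts (D0 + 1)) path_adj C"
    and APH: "A \<in> PH V adj r C"
begin

lemma inRA: "in_R V adj A"
  using APH unfolding PH_def Let_def by blast

lemma pr_eq: "v \<in> V \<Longrightarrow> vheight V adj r r + 1 - vheight V adj r v = d v + 1"
  using vheight_eq vheight_r d_le_D by simp

lemma diagA: "v \<in> V \<Longrightarrow> A v v = C (d v + 1) (d v + 1)"
  using APH pr_eq unfolding PH_def Let_def by force

lemma chset: "{u. u \<in> V \<and> is_child adj r u v} = ch v"
  using is_child_iff ch_V by auto

lemma sumA: "v \<in> V \<Longrightarrow> ch v \<noteq> {} \<Longrightarrow>
   (\<Sum>u\<in>ch v. A v u * A u v) = C (d v + 1) (d v + 2) * C (d v + 2) (d v + 1)"
proof -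
  assume v: "v \<in> V" "ch v \<noteq> {}"
  then have "\<not> is_leaf V adj r v" using leaf_iff by simp
  then have "(\<Sum>u | u \<in> V \<and> is_child adj r u v. A v u * A u v)
     = C (d v + 1) (d v + 1 + 1) * C (d v + 1 + 1) (d v + 1)"
    using APH v pr_eq[OF v(1)] unfolding PH_def Let_def by auto
  then show ?thesis unfolding chset by (simp add: numeral_2_eq_2)
qed

lemma A_zero: "i \<in> V \<Longrightarrow> j \<in> V \<Longrightarrow> i \<noteq> j \<Longrightarrow> \<not> adj i j \<Longrightarrow> A i j = 0"
  using inRA unfolding in_R_def by blast

lemma A_cross:
  assumes c: "c \<in> ch u" and i: "i \<in> desc c" and j: "j \<in> V" "j \<notin> desc c" and nij: "\<not> (i = c \<and> j = u)"
  shows "A i j = 0 \<and> A j i = 0"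
proof -
  have iV: "i \<in> V" using i desc_V by blast
  have ij: "i \<noteq> j" using i j by blast
  have na: "\<not> adj i j"
  proof
    assume "adj i j"
    from desc_adj[OF i this] show False
    proof
      assume "j \<in> desc c" then show False using j by blast
    next
      assume "i = c \<and> c \<noteq> r \<and> j = par c"
      then show False using nij c unfolding ch_def by auto
    qed
  qed
  then have "\<not> adj j i" using sym by blast
  then show ?thesis using A_zero iV j ij na by auto
qed

definition P :: "nat \<Rightarrow> real poly" where "P k = charpoly {k+1..D0+1} C"

lemma C_zero: "i \<in> {1..D0+1} \<Longrightarrow> j \<in> {1..D0+1} \<Longrightarrow> \<not> path_adj i j \<Longrightarrow> i \<noteq> j \<Longrightarrow> C i j = 0"
  using Cpath unfolding in_R_def path_verts_def by blast

lemma P_rec: "k + 1 \<le> D0 \<Longrightarrow> P k = [:- C (k+1) (k+1), 1:] * P (k+1) - [:C (k+1) (k+2) * C (k+2) (k+1):] * P (k+2)"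
proof -
  assume k: "k + 1 \<le> D0"
  have zero: "C i j = 0 \<and> C j i = 0" if "i \<in> {k+1}" "j \<in> {k+2..D0+1}" "(i,j) \<noteq> (k+1,k+2)" for i j
  proof -
    have "i = k + 1" "j \<ge> k + 3" using that by auto
    then have "\<not> path_adj i j" "\<not> path_adj j i" "i \<noteq> j" unfolding path_adj_def by auto
    moreover have "i \<in> {1..D0+1}" "j \<in> {1..D0+1}" using that k by auto
    ultimately show ?thesis using C_zero by blast
  qed
  have "charpoly ({k+1} \<union> {k+2..D0+1}) C = charpoly {k+1} C * charpoly {k+2..D0+1} C
     - [:C (k+1) (k+2) * C (k+2) (k+1):] * (charpoly ({k+1} - {k+1}) C * charpoly ({k+2..D0+1} - {k+2}) C)"
    by (rule cp_cut) (use zero k in auto)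
  moreover have "{k+1} \<union> {k+2..D0+1} = {k+1..D0+1}" using k by auto
  moreover have "{k+2..D0+1} - {k+2} = {k+2+1..D0+1}" by auto
  ultimately show ?thesis unfolding P_def by (simp add: charpoly_single charpoly_empty)
qed

lemma P_top: "P (D0 + 1) = 1" unfolding P_def by (simp add: charpoly_empty)
lemma P_D: "P D0 = [:- C (D0+1) (D0+1), 1:]" unfolding P_def by (simp add: charpoly_single)

lemma P_nz: "k \<le> D0 + 1 \<Longrightarrow> P k \<noteq> 0 \<and> Polynomial.degree (P k) = D0 + 1 - k"
proof (induction "D0 + 1 - k" arbitrary: k rule: less_induct)
  case less
  show ?case
  proof (cases "k + 1 \<le> D0")
    case False
    then have "k = D0 \<or> k = D0 + 1" using less.prems by auto
    then show ?thesis using P_top P_D by auto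
  next
    case True
    have IH1: "P (k+1) \<noteq> 0" "Polynomial.degree (P (k+1)) = D0 - k" using less.hyps[of "k+1"] True by auto
    have IH2: "P (k+2) \<noteq> 0" "Polynomial.degree (P (k+2)) = D0 - k - 1" using less.hyps[of "k+2"] True by auto
    let ?L = "[:- C (k+1) (k+1), 1:] * P (k+1)"
    let ?R = "[:C (k+1) (k+2) * C (k+2) (k+1):] * P (k+2)"
    have dL: "Polynomial.degree ?L = D0 + 1 - k" using IH1 True by (subst degree_mult_eq) auto
    have dR: "Polynomial.degree ?R \<le> D0 - k - 1" using IH2 by (simp add: degree_smult_le)
    have "Polynomial.degree (?L + (- ?R)) = Polynomial.degree ?L" using dL dR True by (intro degree_add_eq_left) simp
    then have dP: "Polynomial.degree (P k) = D0 + 1 - k" using P_rec[OF True] dL by simp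
    then have "P k \<noteq> 0" using True by auto
    then show ?thesis using dP by simp
  qed
qed


lemma cp_union_ch: "S \<subseteq> ch u \<Longrightarrow> charpoly (\<Union>(desc ` S)) A = (\<Prod>c\<in>S. charpoly (desc c) A)"
proof (induction S rule: infinite_finite_induct)
  case (infinite S) then show ?case using finite_subset[OF _ fin_ch] by blast
next
  case empty then show ?case by (simp add: charpoly_empty)
next
  case (insert c S)
  have c: "c \<in> ch u" "S \<subseteq> ch u" using insert.prems by auto
  have disj: "desc c \<inter> \<Union>(desc ` S) = {}"
    using desc_disj[OF c(1)] c(2) insert.hyps(2) by blast
  have fin: "finite (\<Union>(desc ` S))" using insert.hyps(1) fin_desc by blast
  have un: "u \<notin> \<Union>(desc ` S)" using u_notin c(2) by blast
  have "charpoly (desc c \<union> \<Union>(desc ` S)) A = charpoly (desc c) A * charpoly (\<Union>(desc ` S)) A"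
  proof (rule cp_block[OF fin_desc fin disj])
    fix i j assume i: "i \<in> desc c" and j: "j \<in> \<Union>(desc ` S)"
    have "j \<in> V" using j desc_V by blast
    moreover have "j \<notin> desc c" using j disj by blast
    moreover have "j \<noteq> u" using j un by blast
    ultimately show "A i j = 0 \<and> A j i = 0" using A_cross[OF c(1) i] by blast
  qed
  then show ?case using insert.IH c insert.hyps by simp
qed

lemma desc_minus: "c \<in> V \<Longrightarrow> desc c - {c} = \<Union>(desc ` ch c)"
  using desc_split[of c] u_notin by blast

lemma S_step:
  assumes u: "u \<in> V"
    and Qc: "\<And>c. c \<in> ch u \<Longrightarrow> charpoly (desc c) A * P (d u + 2) = P (d u + 1) * charpoly (desc c - {c}) A"
  shows "S \<subseteq> ch u \<Longrightarrow> charpoly (insert u (\<Union>(desc ` S))) A * P (d u + 1) =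
     ([:- A u u, 1:] * P (d u + 1) - [:\<Sum>c\<in>S. A u c * A c u:] * P (d u + 2)) * (\<Prod>c\<in>S. charpoly (desc c) A)"
proof (induction S rule: infinite_finite_induct)
  case (infinite S) then show ?case using finite_subset[OF _ fin_ch] by blast
next
  case empty then show ?case by (simp add: charpoly_single)
next
  case (insert c S)
  have c: "c \<in> ch u" "S \<subseteq> ch u" using insert.prems by auto
  define X where "X = insert u (\<Union>(desc ` S))"
  have XV: "X \<subseteq> V" unfolding X_def using u desc_V by blast
  have un: "u \<notin> \<Union>(desc ` S)" using u_notin c(2) by blast
  have disj: "desc c \<inter> X = {}"
    unfolding X_def using desc_disj[OF c(1)] c(2) insert.hyps(2) u_notin[OF c(1)] by blast
  have finX: "finite X" unfolding X_def using insert.hyps(1) fin_desc by blast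
  have cc: "c \<in> desc c" using desc_self c(1) ch_V by blast
  have uX: "u \<in> X" unfolding X_def by simp
  have cut: "charpoly (desc c \<union> X) A = charpoly (desc c) A * charpoly X A
     - [:A c u * A u c:] * (charpoly (desc c - {c}) A * charpoly (X - {u}) A)"
  proof (rule cp_cut[OF fin_desc finX disj cc uX])
    fix i j assume i: "i \<in> desc c" and j: "j \<in> X" and ij: "(i, j) \<noteq> (c, u)"
    have "j \<in> V" using j XV by blast
    moreover have "j \<notin> desc c" using j disj by blast
    ultimately show "A i j = 0 \<and> A j i = 0" using A_cross[OF c(1) i] ij by blast
  qed
  have Xu: "X - {u} = \<Union>(desc ` S)" unfolding X_def using un by blast
  have F: "charpoly (X - {u}) A = (\<Prod>c\<in>S. charpoly (desc c) A)"
    unfolding Xu using cp_union_ch[OF c(2)] .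
  have IH: "charpoly X A * P (d u + 1) =
     ([:- A u u, 1:] * P (d u + 1) - [:\<Sum>c\<in>S. A u c * A c u:] * P (d u + 2)) * charpoly (X - {u}) A"
    using insert.IH c(2) F unfolding X_def by simp
  have nz: "P (d u + 1) \<noteq> 0"
  proof -
    have "d c \<le> D0" using d_le_D c(1) ch_V by blast
    then have "d u + 1 \<le> D0 + 1" using ch_d[OF c(1)] by simp
    then show ?thesis using P_nz by blast
  qed
  have eq: "insert u (\<Union>(desc ` insert c S)) = desc c \<union> X" unfolding X_def by auto
  have "charpoly (desc c \<union> X) A * P (d u + 1) =
      ([:- A u u, 1:] * P (d u + 1) - [:(\<Sum>c\<in>S. A u c * A c u) + A u c * A c u:] * P (d u + 2))
      * (charpoly (desc c) A * charpoly (X - {u}) A)"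
    unfolding cut using poly_alg[OF nz IH Qc[OF c(1)], of "A u c * A c u"] by (simp add: mult.commute)
  then show ?case unfolding eq F using insert.hyps by (simp add: add.commute)
qed

lemma Q_main: "u \<in> V \<Longrightarrow> charpoly (desc u) A * P (d u + 1) = P (d u) * (\<Prod>c\<in>ch u. charpoly (desc c) A)"
proof (induction "D0 - d u" arbitrary: u rule: less_induct)
  case less
  have u: "u \<in> V" using less.prems .
  have Qc: "charpoly (desc c) A * P (d u + 2) = P (d u + 1) * charpoly (desc c - {c}) A" if c: "c \<in> ch u" for c
  proof -
    have cV: "c \<in> V" using c ch_V by blast
    have dc: "d c = d u + 1" using ch_d c .
    have "D0 - d c < D0 - d u" using dc ch_lt[OF c] by simp
    then have "charpoly (desc c) A * P (d c + 1) = P (d c) * (\<Prod>g\<in>ch c. charpoly (desc g) A)"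
      using less.hyps cV by blast
    also have "(\<Prod>g\<in>ch c. charpoly (desc g) A) = charpoly (desc c - {c}) A"
      using cp_union_ch[of "ch c" c] desc_minus[OF cV] by simp
    finally show ?thesis using dc by (simp add: numeral_2_eq_2)
  qed
  have S: "charpoly (insert u (\<Union>(desc ` ch u))) A * P (d u + 1) =
     ([:- A u u, 1:] * P (d u + 1) - [:\<Sum>c\<in>ch u. A u c * A c u:] * P (d u + 2)) * (\<Prod>c\<in>ch u. charpoly (desc c) A)"
    using S_step[OF u Qc] by blast
  have split: "insert u (\<Union>(desc ` ch u)) = desc u" using desc_split[OF u] by simp
  show ?case
  proof (cases "ch u = {}")
    case True
    have "d u = D0" using leaf_D u True by blast
    then have "[:- A u u, 1:] * P (d u + 1) = P (d u)" using P_top P_D diagA[OF u] by simp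
    then show ?thesis using S True unfolding split by simp
  next
    case False
    then obtain c where c: "c \<in> ch u" by blast
    have lt: "d u + 1 \<le> D0" using ch_lt[OF c] by simp
    have "[:- A u u, 1:] * P (d u + 1) - [:\<Sum>c\<in>ch u. A u c * A c u:] * P (d u + 2) = P (d u)"
      using P_rec[OF lt] sumA[OF u False] diagA[OF u] by (simp add: numeral_2_eq_2)
    then show ?thesis using S unfolding split by simp
  qed
qed

lemma R_main: "u \<in> V \<Longrightarrow> charpoly (desc u) A * (\<Prod>w\<in>desc u. P (d w + 1)) = (\<Prod>w\<in>desc u. P (d w))"
proof (induction "D0 - d u" arbitrary: u rule: less_induct)
  case less
  have u: "u \<in> V" using less.prems .
  have split: "desc u = insert u (\<Union>(desc ` ch u))" using desc_split[OF u] .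
  have un: "u \<notin> \<Union>(desc ` ch u)" using u_notin by blast
  have finU: "finite (\<Union>(desc ` ch u))" using fin_ch fin_desc by blast
  have pd: "(\<Prod>w\<in>\<Union>(desc ` ch u). f w) = (\<Prod>c\<in>ch u. \<Prod>w\<in>desc c. f w)" for f :: "'a \<Rightarrow> real poly"
    by (rule prod.UNION_disjoint[OF fin_ch]) (use fin_desc desc_disj in auto)
  have Pu: "(\<Prod>w\<in>desc u. f w) = f u * (\<Prod>c\<in>ch u. \<Prod>w\<in>desc c. f w)" for f :: "'a \<Rightarrow> real poly"
    unfolding split by (simp only: prod.insert[OF finU un] pd)
  have IH: "charpoly (desc c) A * (\<Prod>w\<in>desc c. P (d w + 1)) = (\<Prod>w\<in>desc c. P (d w))" if c: "c \<in> ch u" for c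
  proof -
    have "D0 - d c < D0 - d u" using ch_d[OF c] ch_lt[OF c] by simp
    then show ?thesis using less.hyps c ch_V by blast
  qed
  have "charpoly (desc u) A * (\<Prod>w\<in>desc u. P (d w + 1)) =
     (charpoly (desc u) A * P (d u + 1)) * (\<Prod>c\<in>ch u. \<Prod>w\<in>desc c. P (d w + 1))"
    unfolding Pu[of "\<lambda>w. P (d w + 1)"] by (simp add: mult.assoc)
  also have "\<dots> = P (d u) * ((\<Prod>c\<in>ch u. charpoly (desc c) A) * (\<Prod>c\<in>ch u. \<Prod>w\<in>desc c. P (d w + 1)))"
    unfolding Q_main[OF u] by (simp add: mult.assoc)
  also have "(\<Prod>c\<in>ch u. charpoly (desc c) A) * (\<Prod>c\<in>ch u. \<Prod>w\<in>desc c. P (d w + 1))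
      = (\<Prod>c\<in>ch u. charpoly (desc c) A * (\<Prod>w\<in>desc c. P (d w + 1)))"
    by (rule prod.distrib[symmetric])
  also have "\<dots> = (\<Prod>c\<in>ch u. \<Prod>w\<in>desc c. P (d w))"
    by (rule prod.cong) (use IH in auto)
  also have "P (d u) * \<dots> = (\<Prod>w\<in>desc u. P (d w))"
    unfolding Pu[of "\<lambda>w. P (d w)"] ..
  finally show ?case .
qed

lemma V_main: "charpoly V A * (\<Prod>w\<in>V. P (d w + 1)) = (\<Prod>w\<in>V. P (d w))"
  using R_main[OF rV] unfolding desc_r .

end

lemma map_of_real_mult:
  "map_poly complex_of_real (p * q) = map_poly complex_of_real p * map_poly complex_of_real q"
  by (rule poly_eqI) (simp add: coeff_map_poly coeff_mult)

lemma map_of_real_prod: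
  "map_poly complex_of_real (\<Prod>x\<in>S. f x) = (\<Prod>x\<in>S. map_poly complex_of_real (f x))"
proof (induction S rule: infinite_finite_induct)
  case (insert x F) then show ?case by (simp add: map_of_real_mult)
qed simp_all

lemma map_of_real_nz: "p \<noteq> 0 \<Longrightarrow> map_poly complex_of_real p \<noteq> 0"
  by (subst map_poly_eq_0_iff) auto

lemma sum_const_mset: "finite A \<Longrightarrow> (\<Sum>x\<in>A. M) = repeat_mset (card A) M"
  by (induction A rule: finite_induct) auto

context hedge_mat
begin

definition L :: "nat \<Rightarrow> 'a set" where "L k = {w \<in> V. d w = k}"
abbreviation N :: "nat \<Rightarrow> nat" where "N k \<equiv> card (L k)"
abbreviation Pr :: "nat \<Rightarrow> complex multiset" where "Pr k \<equiv> proots (map_poly complex_of_real (P k))"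

lemma N_mono: "1 \<le> k \<Longrightarrow> k \<le> D0 \<Longrightarrow> N (k - 1) \<le> N k"
proof -
  assume k: "1 \<le> k" "k \<le> D0"
  have "L (k - 1) \<subseteq> par ` L k"
  proof
    fix w assume "w \<in> L (k - 1)"
    then have w: "w \<in> V" "d w = k - 1" unfolding L_def by auto
    then have "ch w \<noteq> {}" using ch_ne k by simp
    then obtain c where c: "c \<in> ch w" by blast
    then have "c \<in> L k" "par c = w" using ch_d[OF c] w k ch_V unfolding L_def ch_def by auto
    then show "w \<in> par ` L k" by blast
  qed
  moreover have "finite (L k)" unfolding L_def using finV by simp
  ultimately show ?thesis using card_mono card_image_le order_trans by (metis finite_imageI)
qed

lemma group_d: "(\<Sum>w\<in>V. g (d w)) = (\<Sum>k\<in>{0..<D0+1}. repeat_mset (N k) (g k))"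
proof -
  have "(\<Sum>w\<in>V. g (d w)) = (\<Sum>k\<in>{0..<D0+1}. \<Sum>w\<in>{x \<in> V. d x = k}. g (d w))"
    by (rule sum.group[symmetric]) (use finV d_le_D in \<open>auto simp: less_Suc_eq_le\<close>)
  also have "\<dots> = (\<Sum>k\<in>{0..<D0+1}. \<Sum>w\<in>L k. g k)"
    unfolding L_def by (intro sum.cong refl) auto
  also have "\<dots> = (\<Sum>k\<in>{0..<D0+1}. repeat_mset (N k) (g k))"
    using finV unfolding L_def by (simp add: sum_const_mset)
  finally show ?thesis .
qed

lemma level_set_eq: "j \<le> D0 \<Longrightarrow> level_set V adj r j = L (D0 - j)"
  unfolding level_set_def L_def using vheight_eq d_le_D by fastforce

lemma level_set_top: "level_set V adj r (D0 + 1) = {}"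
  unfolding level_set_def using vheight_eq by auto

definition fN :: "nat \<Rightarrow> nat" where "fN k = (if k = 0 then 0 else N (k - 1))"

lemma spec_V: "spectrum_ms V A + (\<Sum>k\<in>{0..<D0+1}. repeat_mset (N k) (Pr (k + 1)))
    = (\<Sum>k\<in>{0..<D0+1}. repeat_mset (N k) (Pr k))"
proof -
  let ?f = "map_poly complex_of_real"
  have nzP: "P (d w) \<noteq> 0" "P (d w + 1) \<noteq> 0" if "w \<in> V" for w
    using P_nz d_le_D[OF that] by auto
  have "?f (charpoly V A) * (\<Prod>w\<in>V. ?f (P (d w + 1))) = (\<Prod>w\<in>V. ?f (P (d w)))"
    using arg_cong[OF V_main, of ?f] by (simp add: map_of_real_mult map_of_real_prod)
  moreover have nzR: "(\<Prod>w\<in>V. ?f (P (d w))) \<noteq> 0"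
    using nzP map_of_real_nz finV by (simp add: prod_zero_iff)
  ultimately have nzc: "?f (charpoly V A) \<noteq> 0" by auto
  have nzL: "(\<Prod>w\<in>V. ?f (P (d w + 1))) \<noteq> 0"
    using nzP map_of_real_nz finV by (simp add: prod_zero_iff)
  have "proots (?f (charpoly V A) * (\<Prod>w\<in>V. ?f (P (d w + 1)))) = proots (\<Prod>w\<in>V. ?f (P (d w)))"
    using \<open>?f (charpoly V A) * _ = _\<close> by simp
  then have "spectrum_ms V A + (\<Sum>w\<in>V. Pr (d w + 1)) = (\<Sum>w\<in>V. Pr (d w))"
    unfolding spectrum_ms_def using nzc nzL nzP map_of_real_nz
    by (simp add: proots_mult proots_prod)
  then show ?thesis
    using group_d[of "\<lambda>k. Pr (k + 1)"] group_d[of Pr] by simp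
qed

lemma shift: "(\<Sum>k\<in>{0..<D0+1}. repeat_mset (N k) (Pr (k + 1))) = (\<Sum>k\<in>{0..<D0+1}. repeat_mset (fN k) (Pr k))"
proof -
  have "(\<Sum>k\<in>{0..<D0+1}. repeat_mset (N k) (Pr (k + 1))) = (\<Sum>k\<in>{0..<D0}. repeat_mset (N k) (Pr (k + 1)))"
    using P_top by simp
  also have "\<dots> = repeat_mset (fN 0) (Pr 0) + (\<Sum>k\<in>{0..<D0}. repeat_mset (fN (Suc k)) (Pr (Suc k)))"
    by (simp add: fN_def)
  also have "\<dots> = (\<Sum>k\<in>{0..<Suc D0}. repeat_mset (fN k) (Pr k))"
    by (simp only: sum.atLeast0_lessThan_Suc_shift comp_def)
  also have "{0..<Suc D0} = {0..<D0+1}" by simp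
  finally show ?thesis .
qed

lemma main_D0: "spectrum_ms V A = (\<Sum>k\<in>{0..<D0+1}. repeat_mset (N k - fN k) (Pr k))"
proof -
  have XB: "(\<Sum>k\<in>{0..<D0+1}. repeat_mset (N k - fN k) (Pr k)) + (\<Sum>k\<in>{0..<D0+1}. repeat_mset (fN k) (Pr k))
     = (\<Sum>k\<in>{0..<D0+1}. repeat_mset (N k) (Pr k))"
  proof -
    have "N k - fN k + fN k = N k" if "k \<in> {0..<D0+1}" for k
      using N_mono[of k] that unfolding fN_def by auto
    then have "repeat_mset (N k - fN k) (Pr k) + repeat_mset (fN k) (Pr k) = repeat_mset (N k) (Pr k)"
      if "k \<in> {0..<D0+1}" for k
      using that by (metis repeat_mset_distrib)
    then show ?thesis unfolding sum.distrib[symmetric] by (rule sum.cong[OF refl])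
  qed
  have "spectrum_ms V A + (\<Sum>k\<in>{0..<D0+1}. repeat_mset (fN k) (Pr k))
     = (\<Sum>k\<in>{0..<D0+1}. repeat_mset (N k - fN k) (Pr k)) + (\<Sum>k\<in>{0..<D0+1}. repeat_mset (fN k) (Pr k))"
    unfolding XB using spec_V unfolding shift .
  then show ?thesis by (rule add_right_imp_eq)
qed

lemma final: "spectrum_ms V A =
    (\<Sum>i\<in>{1..D0+1}. repeat_mset (nat (ell V adj r i)) (spectrum_ms {D0 + 2 - i..D0 + 1} C))"
proof -
  have "(\<Sum>i\<in>{1..D0+1}. repeat_mset (nat (ell V adj r i)) (spectrum_ms {D0 + 2 - i..D0 + 1} C))
      = (\<Sum>k\<in>{0..<D0+1}. repeat_mset (nat (ell V adj r (D0+1-k))) (spectrum_ms {D0 + 2 - (D0+1-k)..D0 + 1} C))"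
    by (rule sum.reindex_bij_witness[of _ "\<lambda>k. D0+1-k" "\<lambda>i. D0+1-i"]) auto
  also have "\<dots> = (\<Sum>k\<in>{0..<D0+1}. repeat_mset (N k - fN k) (Pr k))"
  proof (rule sum.cong[OF refl])
    fix k assume k: "k \<in> {0..<D0+1}"
    have sp: "spectrum_ms {D0 + 2 - (D0+1-k)..D0 + 1} C = Pr k"
    proof -
      have "D0 + 2 - (D0+1-k) = k + 1" using k by auto
      then show ?thesis unfolding spectrum_ms_def P_def by simp
    qed
    have l1: "level_set V adj r (D0 + 1 - k - 1) = L k"
      using level_set_eq[of "D0 - k"] k by auto
    have l2: "card (level_set V adj r (D0 + 1 - k)) = fN k"
    proof (cases "k = 0")
      case True then show ?thesis using level_set_top unfolding fN_def by simp
    next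
      case False
      then have "level_set V adj r (D0 + 1 - k) = L (k - 1)"
        using level_set_eq[of "D0 + 1 - k"] k by auto
      then show ?thesis using False unfolding fN_def by simp
    qed
    have "nat (ell V adj r (D0+1-k)) = N k - fN k"
      unfolding ell_def l1 l2 by simp
    then show "repeat_mset (nat (ell V adj r (D0+1-k))) (spectrum_ms {D0 + 2 - (D0+1-k)..D0 + 1} C)
        = repeat_mset (N k - fN k) (Pr k)" using sp by simp
  qed
  finally show ?thesis using main_D0 by simp
qed

end

theorem mainTheorem3:
  fixes V :: "'a set" and adj :: "'a \<Rightarrow> 'a \<Rightarrow> bool" and r :: 'a
    and C :: "nat \<Rightarrow> nat \<Rightarrow> real" and A :: "'a \<Rightarrow> 'a \<Rightarrow> real" and H :: nat
  assumes "is_hedge V adj r"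
    and "H = vheight V adj r r"
    and "in_R (path_verts (H + 1)) path_adj C"
    and "A \<in> PH V adj r C"
  shows "spectrum_ms V A =
    (\<Sum>i\<in>{1..H+1}. repeat_mset (nat (ell V adj r i)) (spectrum_ms {H + 2 - i..H + 1} C))"
proof -
  interpret hedge_ctx V adj r using assms(1) by unfold_locales
  have H: "H = D0" using assms(2) vheight_r by simp
  interpret hedge_mat V adj r C A
    by unfold_locales (use assms H in auto)
  show ?thesis using final unfolding H .
qed

end
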